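(* Let $\mathfrak M$ be a D2-brane with $[X^i,X^j] = \imath \Theta^{ij}$, and $\Delta \vec X^2 \equiv \langle \hspace{-0.2em} \langle \Psi |\vec X^2 |\Psi \rangle \hspace{-0.2em} \rangle - \langle \hspace{-0.2em} \langle \Psi|\vec X|\Psi \rangle \hspace{-0.2em} \rangle^2$ be the square uncertainty onto the location in the state $\Psi \in \mathbb C^2 \otimes \mathscr F$ ($\vec X^2 \equiv \delta_{ij} X^i X^j$). Then \begin{equation} \Delta \vec X^2 \geq \frac{1}{2} {\varepsilon_{ij}}^k \langle \hspace{-0.2em} \langle \sigma_k \otimes \Theta^{ij} \rangle \hspace{-0.2em} \rangle . \end{equation}
   Context: A noncommutative D2-brane $\mathfrak M = (\mathfrak X,\mathbb C^2\otimes \mathscr F, D_x)$ is a spectral triple where $\mathscr F$ is a separable Hilbert space, $\mathfrak X$ is a $*$-algebra of operators acting on $\mathscr F$, and $D_x = \sigma_i \otimes (X^i-x^i)$ is its Dirac operator, with $(\sigma_i)$ the Pauli matrices, $(X^i)_{i=1,2,3}$ self-adjoint operators of $\mathfrak X$ (coordinate observables) and $x\in\mathbb R^3$ a classical parameter. $\langle \hspace{-0.2em} \langle \cdot \rangle \hspace{-0.2em} \rangle$ denotes the expectation value in the state $\Psi \in \mathbb C^2\otimes\mathscr F$. *)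

theory Defs
  imports Complex_Main "HOL-Library.Complex_Order"
begin

text \<open>Indices i,j,k of R^3 are 0,1,2; indices a,b of C^2 are 0,1.
  The space C^2 (x) F is identified with F x F: a state Psi is a pair of
  components psi 0, psi 1 in F.\<close>

text \<open>Pauli matrices: pauli 0 = sigma_1, pauli 1 = sigma_2, pauli 2 = sigma_3.\<close>
definition pauli :: "nat \<Rightarrow> nat \<Rightarrow> nat \<Rightarrow> complex" where
  "pauli k a b =
     (if k = 0 then (if a \<noteq> b then 1 else 0)
      else if k = 1 then (if a = 0 \<and> b = 1 then - \<i> else if a = 1 \<and> b = 0 then \<i> else 0)
      else if k = 2 then (if a = 0 \<and> b = 0 then 1 else if a = 1 \<and> b = 1 then -1 else 0)
      else 0)"

definition id2 :: "nat \<Rightarrow> nat \<Rightarrow> complex" where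
  "id2 a b = (if a = b then 1 else 0)"

definition levi_civita :: "nat \<Rightarrow> nat \<Rightarrow> nat \<Rightarrow> complex" where
  "levi_civita i j k =
     (if (i,j,k) \<in> {(0,1,2),(1,2,0),(2,0,1)} then 1
      else if (i,j,k) \<in> {(0,2,1),(2,1,0),(1,0,2)} then -1
      else 0)"

definition is_inner_product ::
  "(complex \<Rightarrow> 'f::ab_group_add \<Rightarrow> 'f) \<Rightarrow> ('f \<Rightarrow> 'f \<Rightarrow> complex) \<Rightarrow> bool" where
  "is_inner_product scl ip \<longleftrightarrow>
     vector_space scl \<and>
     (\<forall>u v w. ip u (v + w) = ip u v + ip u w) \<and>
     (\<forall>u v c. ip u (scl c v) = c * ip u v) \<and>
     (\<forall>u v. ip u v = cnj (ip v u)) \<and>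
     (\<forall>u. 0 \<le> ip u u) \<and>
     (\<forall>u. ip u u = 0 \<longrightarrow> u = 0)"

definition self_adjoint_op ::
  "(complex \<Rightarrow> 'f::ab_group_add \<Rightarrow> 'f) \<Rightarrow> ('f \<Rightarrow> 'f \<Rightarrow> complex) \<Rightarrow> ('f \<Rightarrow> 'f) \<Rightarrow> bool" where
  "self_adjoint_op scl ip A \<longleftrightarrow> Vector_Spaces.linear scl scl A \<and> (\<forall>u v. ip (A u) v = ip u (A v))"

text \<open>Expectation value <<Psi | M (x) A | Psi>> of M (x) A, with M a 2x2 matrix.\<close>
definition expval ::
  "('f \<Rightarrow> 'f \<Rightarrow> complex) \<Rightarrow> (nat \<Rightarrow> 'f) \<Rightarrow> (nat \<Rightarrow> nat \<Rightarrow> complex) \<Rightarrow> ('f \<Rightarrow> 'f) \<Rightarrow> complex" where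
  "expval ip psi M A = (\<Sum>a<2. \<Sum>b<2. M a b * ip (psi a) (A (psi b)))"

definition state_norm2 :: "('f \<Rightarrow> 'f \<Rightarrow> complex) \<Rightarrow> (nat \<Rightarrow> 'f) \<Rightarrow> complex" where
  "state_norm2 ip psi = (\<Sum>a<2. ip (psi a) (psi a))"

end

theory Submission
  imports Defs
begin

lemma ident:
  fixes G :: "nat \<Rightarrow> nat \<Rightarrow> nat \<Rightarrow> nat \<Rightarrow> complex"
  shows "(\<Sum>b<2. \<Sum>i<3. G i b i b) - 1/2 * (\<Sum>i<3. \<Sum>j<3. \<Sum>k<3. levi_civita i j k *
     (\<Sum>b<2. \<Sum>c<2. pauli k b c * (- \<i> * (G i b j c - G j b i c))))
   = (\<Sum>a<2. \<Sum>i<3. \<Sum>b<2. \<Sum>j<3. \<Sum>c<2. cnj (pauli i a b) * pauli j a c * G i b j c)"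
  by (simp add: lessThan_Suc numeral_2_eq_2 numeral_3_eq_3 pauli_def levi_civita_def algebra_simps)

locale ipsp =
  fixes scl :: "complex \<Rightarrow> 'f::ab_group_add \<Rightarrow> 'f" and ip :: "'f \<Rightarrow> 'f \<Rightarrow> complex"
  assumes ipa: "is_inner_product scl ip"
begin

lemma vs: "vector_space scl" using ipa unfolding is_inner_product_def by blast

lemma add_r: "ip u (v + w) = ip u v + ip u w" using ipa unfolding is_inner_product_def by blast
lemma scl_r: "ip u (scl c v) = c * ip u v" using ipa unfolding is_inner_product_def by blast
lemma sym: "ip u v = cnj (ip v u)" using ipa unfolding is_inner_product_def by blast
lemma pos: "0 \<le> ip u u" using ipa unfolding is_inner_product_def by blast

lemma zero_r: "ip u 0 = 0"
proof -
  have "ip u 0 = ip u 0 + ip u 0" using add_r[of u 0 0] by simp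
  then show ?thesis by simp
qed

lemma minus_r: "ip u (- v) = - ip u v"
proof -
  have "ip u v + ip u (- v) = 0" using add_r[of u v "- v"] zero_r by simp
  have "ip u (- v) = (ip u v + ip u (- v)) - ip u v" by simp
  with \<open>ip u v + ip u (- v) = 0\<close> show ?thesis by simp
qed

lemma diff_r: "ip u (v - w) = ip u v - ip u w"
  by (simp only: diff_conv_add_uminus add_r minus_r)

lemma sym': "cnj (ip v u) = ip u v" using sym[of v u] by simp

lemma add_l: "ip (u + v) w = ip u w + ip v w"
  using sym[of "u+v" w] by (simp add: add_r sym')

lemma scl_l: "ip (scl c u) w = cnj c * ip u w"
  using sym[of "scl c u" w] by (simp add: scl_r sym')

lemma diff_l: "ip (u - v) w = ip u w - ip v w"
  using sym[of "u-v" w] by (simp add: diff_r sym')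

lemma sum_r: "finite S \<Longrightarrow> ip u (sum f S) = (\<Sum>x\<in>S. ip u (f x))"
  by (induction S rule: finite_induct) (auto simp: zero_r add_r)

lemma sum_l: "finite S \<Longrightarrow> ip (sum f S) w = (\<Sum>x\<in>S. ip (f x) w)"
  using sym[of "sum f S" w] by (simp add: sum_r sym')

lemma L1: "finite I \<Longrightarrow> finite B \<Longrightarrow> ip (\<Sum>i\<in>I. \<Sum>b\<in>B. scl (f i b) (u i b)) v = (\<Sum>i\<in>I. \<Sum>b\<in>B. cnj (f i b) * ip (u i b) v)"
  by (simp add: sum_l scl_l)
lemma L2: "finite I \<Longrightarrow> finite B \<Longrightarrow> ip v (\<Sum>i\<in>I. \<Sum>b\<in>B. scl (f i b) (u i b)) = (\<Sum>i\<in>I. \<Sum>b\<in>B. f i b * ip v (u i b))"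
  by (simp add: sum_r scl_r)
end

lemma core:
  assumes ip: "is_inner_product scl ip"
    and sa: "\<And>i u v. i < 3 \<Longrightarrow> ip (Y i u) v = ip u (Y i v)"
    and th: "\<And>i j v. i < 3 \<Longrightarrow> j < 3 \<Longrightarrow> Y i (Y j v) - Y j (Y i v) = scl \<i> (T i j v)"
  shows "1/2 * (\<Sum>i<3. \<Sum>j<3. \<Sum>k<3. levi_civita i j k * expval ip psi (pauli k) (T i j))
         \<le> expval ip psi id2 (\<lambda>v. \<Sum>i<3. Y i (Y i v))"
proof -
  interpret ipsp scl ip by (rule ipsp.intro, rule ip)
  interpret vector_space scl by (rule vs)
  define G where "G i b j c = ip (Y i (psi b)) (Y j (psi c))" for i b j c
  define w where "w a = (\<Sum>i<3. \<Sum>b<2. scl (pauli i a b) (Y i (psi b)))" for a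
  have P: "0 \<le> (\<Sum>a<2. ip (w a) (w a))" by (rule sum_nonneg) (rule pos)
  have e1: "(\<Sum>a<2. ip (w a) (w a)) = (\<Sum>a<2. \<Sum>i<3. \<Sum>b<2. \<Sum>j<3. \<Sum>c<2. cnj (pauli i a b) * pauli j a c * G i b j c)"
    unfolding w_def G_def
    by (subst L1, simp, simp, simp add: L2 sum_distrib_left mult.assoc)
  have e2: "expval ip psi id2 (\<lambda>v. \<Sum>i<3. Y i (Y i v)) = (\<Sum>b<2. \<Sum>i<3. G i b i b)"
    unfolding expval_def G_def
    by (simp add: sum_r sa id2_def lessThan_Suc numeral_2_eq_2)
  have tv: "T i j v = scl (- \<i>) (Y i (Y j v) - Y j (Y i v))" if "i<3" "j<3" for i j v
    using th[OF that] by simp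
  have e3: "expval ip psi (pauli k) (T i j) = (\<Sum>b<2. \<Sum>c<2. pauli k b c * (- \<i> * (G i b j c - G j b i c)))"
    if "i<3" "j<3" for i j k
    unfolding expval_def G_def using that
    by (simp add: tv scl_r diff_r sa minus_r algebra_simps)
  have A: "1/2 * (\<Sum>i<3. \<Sum>j<3. \<Sum>k<3. levi_civita i j k * expval ip psi (pauli k) (T i j))
     = 1/2 * (\<Sum>i<3. \<Sum>j<3. \<Sum>k<3. levi_civita i j k *
     (\<Sum>b<2. \<Sum>c<2. pauli k b c * (- \<i> * (G i b j c - G j b i c))))"
    by (simp add: e3)
  have B: "expval ip psi id2 (\<lambda>v. \<Sum>i<3. Y i (Y i v)) - 1/2 * (\<Sum>i<3. \<Sum>j<3. \<Sum>k<3. levi_civita i j k *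
     (\<Sum>b<2. \<Sum>c<2. pauli k b c * (- \<i> * (G i b j c - G j b i c)))) = (\<Sum>a<2. ip (w a) (w a))"
    unfolding e2 e1 by (rule ident)
  have "0 \<le> expval ip psi id2 (\<lambda>v. \<Sum>i<3. Y i (Y i v)) - 1/2 * (\<Sum>i<3. \<Sum>j<3. \<Sum>k<3. levi_civita i j k * expval ip psi (pauli k) (T i j))"
    unfolding A B by (rule P)
  then show ?thesis by (simp only: diff_ge_0_iff_ge)
qed


lemma expval_id2: "expval ip psi id2 A = (\<Sum>b<2. ip (psi b) (A (psi b)))"
  by (simp add: expval_def id2_def lessThan_Suc numeral_2_eq_2)

theorem mainTheorem1:
  fixes scl :: "complex \<Rightarrow> 'f::ab_group_add \<Rightarrow> 'f"
    and ip :: "'f \<Rightarrow> 'f \<Rightarrow> complex"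
    and X :: "nat \<Rightarrow> 'f \<Rightarrow> 'f"
    and Theta :: "nat \<Rightarrow> nat \<Rightarrow> 'f \<Rightarrow> 'f"
    and psi :: "nat \<Rightarrow> 'f"
  assumes ip: "is_inner_product scl ip"
    and sa: "\<And>i. i < 3 \<Longrightarrow> self_adjoint_op scl ip (X i)"
    and comm: "\<And>i j v. i < 3 \<Longrightarrow> j < 3 \<Longrightarrow> X i (X j v) - X j (X i v) = scl \<i> (Theta i j v)"
    and norm: "state_norm2 ip psi = 1"
  shows "1/2 * (\<Sum>i<3. \<Sum>j<3. \<Sum>k<3. levi_civita i j k * expval ip psi (pauli k) (Theta i j))
         \<le> expval ip psi id2 (\<lambda>v. \<Sum>i<3. X i (X i v)) - (\<Sum>i<3. (expval ip psi id2 (X i))\<^sup>2)"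
proof -
  interpret ipsp scl ip by (rule ipsp.intro, rule ip)
  interpret vector_space scl by (rule vs)
  have sa1: "ip (X i u) v = ip u (X i v)" if "i < 3" for i u v
    using sa[OF that] unfolding self_adjoint_op_def by blast
  have lin: "module_hom scl scl (X i)" if "i < 3" for i
    using sa[OF that] unfolding self_adjoint_op_def by (simp add: module_hom_iff_linear)
  have Xd: "X i (u - v) = X i u - X i v" if "i < 3" for i u v
    using module_hom.diff[OF lin[OF that]] .
  have Xs: "X i (scl c v) = scl c (X i v)" if "i < 3" for i c v
    using module_hom.scale[OF lin[OF that]] .
  define x where "x i = expval ip psi id2 (X i)" for i
  have xr: "x i \<in> \<real>" if "i < 3" for i
  proof -
    have "cnj (x i) = x i" unfolding x_def expval_id2
      by (simp add: sym' sa1[OF that, symmetric])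
    then show ?thesis by (simp add: Reals_cnj_iff)
  qed
  define r where "r i = complex_of_real (Re (x i))" for i
  have rx: "r i = x i" if "i < 3" for i using xr[OF that] unfolding r_def by simp
  have cr: "cnj (r i) = r i" for i unfolding r_def by simp
  define Y where "Y i v = X i v - scl (r i) v" for i v
  have saY: "ip (Y i u) v = ip u (Y i v)" if "i < 3" for i u v
    unfolding Y_def by (simp add: diff_l diff_r scl_l scl_r sa1[OF that] cr)
  have thY: "Y i (Y j v) - Y j (Y i v) = scl \<i> (Theta i j v)" if "i < 3" "j < 3" for i j v
  proof -
    have "Y i (Y j v) - Y j (Y i v) = X i (X j v) - X j (X i v)"
    proof -
      have a: "Y i (Y j v) = X i (X j v) - scl (r j) (X i v) - (scl (r i) (X j v) - scl (r i * r j) v)"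
        using that by (simp add: Y_def Xd Xs scale_right_diff_distrib)
      have b: "Y j (Y i v) = X j (X i v) - scl (r i) (X j v) - (scl (r j) (X i v) - scl (r i * r j) v)"
        using that by (simp add: Y_def Xd Xs scale_right_diff_distrib mult.commute)
      show ?thesis unfolding a b by (simp add: algebra_simps)
    qed
    then show ?thesis using comm[OF that] by simp
  qed
  have C: "1/2 * (\<Sum>i<3. \<Sum>j<3. \<Sum>k<3. levi_civita i j k * expval ip psi (pauli k) (Theta i j))
         \<le> expval ip psi id2 (\<lambda>v. \<Sum>i<3. Y i (Y i v))"
    by (rule core[where scl=scl and ip=ip and Y=Y and T=Theta and psi=psi, OF ip saY thY])
  have N: "(\<Sum>b<2. ip (psi b) (psi b)) = 1" using norm unfolding state_norm2_def .
  have trm: "ip (psi b) (Y i (Y i (psi b))) = ip (psi b) (X i (X i (psi b))) - 2 * r i * ip (psi b) (X i (psi b))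
      + r i * r i * ip (psi b) (psi b)" if "i < 3" for i b
  proof -
    have "ip (psi b) (Y i (Y i (psi b))) = ip (Y i (psi b)) (Y i (psi b))" by (simp add: saY[OF that])
    also have "\<dots> = ip (psi b) (X i (X i (psi b))) - 2 * r i * ip (psi b) (X i (psi b))
      + r i * r i * ip (psi b) (psi b)"
      unfolding Y_def
      apply (simp only: diff_l diff_r scl_l scl_r cr sa1[OF that, of "psi b" "X i (psi b)"] sa1[OF that, of "psi b" "psi b"])
      apply (simp add: algebra_simps)
      done
    finally show ?thesis .
  qed
  have E: "expval ip psi id2 (\<lambda>v. \<Sum>i<3. Y i (Y i v))
     = expval ip psi id2 (\<lambda>v. \<Sum>i<3. X i (X i v)) - (\<Sum>i<3. (x i)\<^sup>2)"
  proof -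
    have "expval ip psi id2 (\<lambda>v. \<Sum>i<3. Y i (Y i v)) = (\<Sum>b<2. \<Sum>i<3. ip (psi b) (Y i (Y i (psi b))))"
      unfolding expval_id2 by (simp add: sum_r)
    also have "\<dots> = (\<Sum>b<2. \<Sum>i<3. ip (psi b) (X i (X i (psi b))) - 2 * r i * ip (psi b) (X i (psi b))
      + r i * r i * ip (psi b) (psi b))"
      by (intro sum.cong refl, simp add: trm)
    also have "\<dots> = expval ip psi id2 (\<lambda>v. \<Sum>i<3. X i (X i v)) - (\<Sum>i<3. 2 * r i * x i)
       + (\<Sum>i<3. r i * r i) * (\<Sum>b<2. ip (psi b) (psi b))"
      unfolding expval_id2 x_def
      by (simp add: sum_r add_r lessThan_Suc numeral_2_eq_2 numeral_3_eq_3 algebra_simps)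
    also have "\<dots> = expval ip psi id2 (\<lambda>v. \<Sum>i<3. X i (X i v)) - (\<Sum>i<3. (x i)\<^sup>2)"
      unfolding N using rx
      by (simp add: lessThan_Suc numeral_3_eq_3 power2_eq_square)
    finally show ?thesis .
  qed
  show ?thesis using C unfolding E x_def .
qed

end
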